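(* Let $G$ be a $P_5$-free graph and let $C\subseteq V(G)$ be partitioned into independent sets $C_1,\dots,C_k$ of $G$. Let $D\subseteq C$ be such that $G[D]$ is connected, every vertex of $C$ is in $D$ or has a neighbor in $D$, and $D\cap C_r\neq\emptyset$ for every $r\in\{1,\dots,k\}$. Assume moreover that for every vertex $u\in V(G)\setminus C$ there exists $r\in\{1,\dots,k\}$ such that $u$ has no neighbor in $D\cap C_r$. Let $Y:=V(G)\setminus N[C]$. Then for every connected component $Y'$ of $G[Y]$, the vertex set $V(Y')$ is a module in $G$.
   Context: For $A\subseteq V(G)$, $N(A)$ is the set of vertices outside $A$ with a neighbor in $A$, and $N[A]=A\cup N(A)$. A set $M\subseteq V(G)$ is a module in $G$ if $N(u)\setminus M = N(v)\setminus M$ for all $u,v\in M$. A graph is $P_5$-free if it has no induced path on 5 vertices. *)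

theory Defs
  imports Main
begin

definition graph :: "'a set \<Rightarrow> ('a \<Rightarrow> 'a \<Rightarrow> bool) \<Rightarrow> bool" where
  "graph V E \<longleftrightarrow> finite V \<and> (\<forall>u v. E u v \<longrightarrow> u \<in> V \<and> v \<in> V)
     \<and> (\<forall>u v. E u v \<longrightarrow> E v u) \<and> (\<forall>v. \<not> E v v)"

definition nbhd :: "'a set \<Rightarrow> ('a \<Rightarrow> 'a \<Rightarrow> bool) \<Rightarrow> 'a set \<Rightarrow> 'a set" where
  "nbhd V E A = {v \<in> V - A. \<exists>u\<in>A. E u v}"

definition cnbhd :: "'a set \<Rightarrow> ('a \<Rightarrow> 'a \<Rightarrow> bool) \<Rightarrow> 'a set \<Rightarrow> 'a set" where
  "cnbhd V E A = A \<union> nbhd V E A"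

definition is_module :: "'a set \<Rightarrow> ('a \<Rightarrow> 'a \<Rightarrow> bool) \<Rightarrow> 'a set \<Rightarrow> bool" where
  "is_module V E M \<longleftrightarrow> M \<subseteq> V \<and>
     (\<forall>u\<in>M. \<forall>v\<in>M. nbhd V E {u} - M = nbhd V E {v} - M)"

definition P5_free :: "'a set \<Rightarrow> ('a \<Rightarrow> 'a \<Rightarrow> bool) \<Rightarrow> bool" where
  "P5_free V E \<longleftrightarrow> \<not> (\<exists>p. length p = 5 \<and> distinct p \<and> set p \<subseteq> V \<and>
     (\<forall>i<5. \<forall>j<5. E (p ! i) (p ! j) \<longleftrightarrow> (i = Suc j \<or> j = Suc i)))"

definition connected_set :: "('a \<Rightarrow> 'a \<Rightarrow> bool) \<Rightarrow> 'a set \<Rightarrow> bool" where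
  "connected_set E S \<longleftrightarrow> S \<noteq> {} \<and>
     (\<forall>u\<in>S. \<forall>v\<in>S. (\<lambda>x y. x \<in> S \<and> y \<in> S \<and> E x y)\<^sup>*\<^sup>* u v)"

definition component_of :: "('a \<Rightarrow> 'a \<Rightarrow> bool) \<Rightarrow> 'a set \<Rightarrow> 'a set \<Rightarrow> bool" where
  "component_of E Y Y' \<longleftrightarrow> Y' \<subseteq> Y \<and> connected_set E Y' \<and>
     (\<forall>Z. Y' \<subseteq> Z \<and> Z \<subseteq> Y \<and> connected_set E Z \<longrightarrow> Z = Y')"

definition independent :: "('a \<Rightarrow> 'a \<Rightarrow> bool) \<Rightarrow> 'a set \<Rightarrow> bool" where
  "independent E S \<longleftrightarrow> (\<forall>x\<in>S. \<forall>y\<in>S. \<not> E x y)"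

end

theory Submission
  imports Defs
begin

lemma switch_lemma:
  assumes "R\<^sup>*\<^sup>* a b" "P a" "\<not> P b"
  shows "\<exists>x y. R x y \<and> P x \<and> \<not> P y"
  using assms by (induction rule: rtranclp_induct) auto

lemma P5_contra:
  assumes P5: "P5_free V E" and G: "graph V E"
    and V: "a \<in> V" "b \<in> V" "c \<in> V" "d \<in> V" "e \<in> V"
    and ed: "E a b" "E b c" "E c d" "E d e"
    and ne: "\<not> E a c" "\<not> E a d" "\<not> E a e" "\<not> E b d" "\<not> E b e" "\<not> E c e"
    and dist: "distinct [a,b,c,d,e]"
  shows False
proof -
  have sym: "\<And>u v. E u v \<Longrightarrow> E v u" and irr: "\<And>v. \<not> E v v"
    using G unfolding graph_def by blast+
  have "\<forall>i<5. \<forall>j<5. E ([a,b,c,d,e] ! i) ([a,b,c,d,e] ! j) \<longleftrightarrow> (i = Suc j \<or> j = Suc i)"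
    using ed ne irr sym by (auto simp: eval_nat_numeral less_Suc_eq)
  then have "\<exists>p. length p = 5 \<and> distinct p \<and> set p \<subseteq> V \<and>
     (\<forall>i<5. \<forall>j<5. E (p ! i) (p ! j) \<longleftrightarrow> (i = Suc j \<or> j = Suc i))"
    using V dist by (intro exI[of _ "[a,b,c,d,e]"]) simp
  then show False using P5 unfolding P5_free_def by blast
qed


theorem claim4p4:
  fixes V :: "'a set" and E :: "'a \<Rightarrow> 'a \<Rightarrow> bool"
    and C D :: "'a set" and Cs :: "nat \<Rightarrow> 'a set" and k :: nat
  assumes G: "graph V E"
    and P5: "P5_free V E"
    and CV: "C \<subseteq> V"
    and Cpart: "C = (\<Union>r\<in>{1..k}. Cs r)"
    and Cdisj: "\<forall>r\<in>{1..k}. \<forall>s\<in>{1..k}. r \<noteq> s \<longrightarrow> Cs r \<inter> Cs s = {}"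
    and Cind: "\<forall>r\<in>{1..k}. independent E (Cs r)"
    and DC: "D \<subseteq> C"
    and Dconn: "connected_set E D"
    and Ddom: "C \<subseteq> cnbhd V E D"
    and Dmeet: "\<forall>r\<in>{1..k}. D \<inter> Cs r \<noteq> {}"
    and outside: "\<forall>u\<in>V - C. \<exists>r\<in>{1..k}. \<not> (\<exists>w\<in>D \<inter> Cs r. E u w)"
  shows "\<forall>Y'. component_of E (V - cnbhd V E C) Y' \<longrightarrow> is_module V E Y'"
proof (intro allI impI)
  fix Y' assume comp: "component_of E (V - cnbhd V E C) Y'"
  let ?Y = "V - cnbhd V E C"
  have sym: "\<And>u v. E u v \<Longrightarrow> E v u" and irr: "\<And>v. \<not> E v v"
    and inV: "\<And>u v. E u v \<Longrightarrow> u \<in> V \<and> v \<in> V"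
    using G unfolding graph_def by blast+
  have YY: "Y' \<subseteq> ?Y" and Yc: "connected_set E Y'"
    and Ymax: "\<And>Z. Y' \<subseteq> Z \<Longrightarrow> Z \<subseteq> ?Y \<Longrightarrow> connected_set E Z \<Longrightarrow> Z = Y'"
    using comp unfolding component_of_def by blast+
  have YnC: "\<And>y c. y \<in> Y' \<Longrightarrow> c \<in> C \<Longrightarrow> \<not> E y c \<and> y \<noteq> c"
  proof -
    fix y c assume y: "y \<in> Y'" and c: "c \<in> C"
    have "y \<in> V" "y \<notin> cnbhd V E C" using y YY by auto
    then show "\<not> E y c \<and> y \<noteq> c" using c sym unfolding cnbhd_def nbhd_def by blast
  qed
  show "is_module V E Y'"
    unfolding is_module_def
  proof (intro conjI ballI)
    show "Y' \<subseteq> V" using YY by blast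
  next
    have key: False if u: "u \<in> Y'" and v: "v \<in> Y'" and x: "x \<in> nbhd V E {u} - Y'"
      and xv: "x \<notin> nbhd V E {v} - Y'" for u v x
    proof -
      have xV: "x \<in> V" and ux: "E u x" and xY: "x \<notin> Y'" using x unfolding nbhd_def by auto
      have "x \<noteq> v" using v xY by blast
      then have vx: "\<not> E v x" using xv xV xY unfolding nbhd_def by auto
      have "(\<lambda>a b. a \<in> Y' \<and> b \<in> Y' \<and> E a b)\<^sup>*\<^sup>* u v" using Yc u v unfolding connected_set_def by blast
      from switch_lemma[OF this, of "\<lambda>y. E y x"] ux vx
      obtain y1 y2 where y12: "y1 \<in> Y'" "y2 \<in> Y'" "E y1 y2" "E y1 x" "\<not> E y2 x" by blast
      have xnY: "x \<notin> ?Y"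
      proof
        assume xY2: "x \<in> ?Y"
        let ?Z = "insert x Y'"
        have "connected_set E ?Z"
          unfolding connected_set_def
        proof (intro conjI ballI)
          show "?Z \<noteq> {}" by blast
        next
          fix a b assume a: "a \<in> ?Z" and b: "b \<in> ?Z"
          let ?R = "\<lambda>a b. a \<in> ?Z \<and> b \<in> ?Z \<and> E a b"
          have mono: "?R\<^sup>*\<^sup>* a b" if "(\<lambda>a b. a \<in> Y' \<and> b \<in> Y' \<and> E a b)\<^sup>*\<^sup>* a b" for a b
            using that by (rule rtranclp_mono[THEN predicate2D, rotated]) auto
          have toy1: "?R\<^sup>*\<^sup>* a y1" if "a \<in> ?Z" for a
          proof (cases "a = x")
            case True then show ?thesis using y12 sym by (intro r_into_rtranclp) auto
          next
            case False then show ?thesis using that y12 Yc mono unfolding connected_set_def by blast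
          qed
          have fromy1: "?R\<^sup>*\<^sup>* y1 b" if "b \<in> ?Z" for b
          proof (cases "b = x")
            case True then show ?thesis using y12 sym by (intro r_into_rtranclp) auto
          next
            case False then show ?thesis using that y12 Yc mono unfolding connected_set_def by blast
          qed
          show "?R\<^sup>*\<^sup>* a b" using toy1[OF a] fromy1[OF b] by (rule rtranclp_trans)
        qed
        then have "?Z = Y'" using Ymax[of ?Z] YY xY2 by blast
        then show False using xY by blast
      qed
      then have xN: "x \<in> cnbhd V E C" using xV by blast
      have xnC: "x \<notin> C" using YnC[OF y12(1)] y12(4) by blast
      then obtain c where c: "c \<in> C" "E c x" using xN unfolding cnbhd_def nbhd_def by blast
      obtain r where r: "r \<in> {1..k}" and rn: "\<not> (\<exists>w\<in>D \<inter> Cs r. E x w)" using outside xV xnC by blast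
      have y1V: "y1 \<in> V" "y2 \<in> V" using y12 inV by auto
      have y1y2: "y1 \<noteq> y2" using y12 irr by blast
      have xy: "x \<noteq> y1" "x \<noteq> y2" using xY y12 by auto
      show False
      proof (cases "\<exists>d\<in>D. E x d")
        case True
        then obtain d where d: "d \<in> D" "E x d" by blast
        obtain d' where d': "d' \<in> D \<inter> Cs r" using Dmeet r by blast
        have "(\<lambda>a b. a \<in> D \<and> b \<in> D \<and> E a b)\<^sup>*\<^sup>* d d'" using Dconn d d' unfolding connected_set_def by blast
        from switch_lemma[OF this, of "\<lambda>y. E x y"] d d' rn
        obtain d1 d2 where dd: "d1 \<in> D" "d2 \<in> D" "E d1 d2" "E x d1" "\<not> E x d2" by blast
        have dC: "d1 \<in> C" "d2 \<in> C" using dd DC by auto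
        show False
          apply (rule P5_contra[OF P5 G, of y2 y1 x d1 d2])
          using y12 dd dC YnC y1V xV CV y1y2 xy xnC irr sym by (auto dest: sym)
      next
        case False
        have "c \<notin> D" using False c sym by blast
        then obtain d where d: "d \<in> D" "E d c" using c Ddom unfolding cnbhd_def nbhd_def by blast
        have dC: "d \<in> C" using d DC by auto
        show False
          apply (rule P5_contra[OF P5 G, of y2 y1 x c d])
          using y12 d dC c YnC y1V xV CV y1y2 xy xnC irr sym False by (auto dest: sym)
      qed
    qed
    fix u v assume u: "u \<in> Y'" and v: "v \<in> Y'"
    show "nbhd V E {u} - Y' = nbhd V E {v} - Y'"
      using key[OF u v] key[OF v u] by blast
  qed
qed

end
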